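(* Let $m,n,a,b$ be positive integers with $a<m$, $b<n$, and let $A$ be the $m\times n$ array whose empty cells are exactly those in $I_1\times I_2$, where $I_1=[m-a+1,m]$ and $I_2$ is either $[1,b]$ or $[n-b+1,n]$. If $\gcd(m,n)=a+b$ and $\gcd(a,b)=1$, then the bishop is a solution to $T(A)$.
   Context: Arrays are toroidal (row indices mod $m$, column indices mod $n$); $F(A)$ is the set of filled cells. $s_R(i,j)=(i,j+t)$, $s_C(i,j)=(i+t,j)$ with $t\ge1$ minimal such that the cell is filled. The bishop's move is $s_C\circ s_R$. A move function is a solution to $T(A)$ if it is a permutation of $F(A)$ forming a single cycle of length $|F(A)|$. *)

theory Defs
  imports Main
begin

text \<open>Cells of an m x n toroidal array are indexed 0-based: (i,j) with i < m, j < n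
  (paper row r corresponds to i = r - 1, column c to j = c - 1).
  An array is represented by its set F of filled cells.\<close>

definition cells :: "nat \<Rightarrow> nat \<Rightarrow> (nat \<times> nat) set" where
  "cells m n = {0..<m} \<times> {0..<n}"

definition sR :: "nat \<Rightarrow> nat \<Rightarrow> (nat \<times> nat) set \<Rightarrow> nat \<times> nat \<Rightarrow> nat \<times> nat" where
  "sR m n F c = (let (i, j) = c;
                     t = (LEAST t::nat. t \<ge> 1 \<and> (i, (j + t) mod n) \<in> F)
                 in (i, (j + t) mod n))"

definition sC :: "nat \<Rightarrow> nat \<Rightarrow> (nat \<times> nat) set \<Rightarrow> nat \<times> nat \<Rightarrow> nat \<times> nat" where
  "sC m n F c = (let (i, j) = c;
                     t = (LEAST t::nat. t \<ge> 1 \<and> ((i + t) mod m, j) \<in> F)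
                 in ((i + t) mod m, j))"

definition bishop :: "nat \<Rightarrow> nat \<Rightarrow> (nat \<times> nat) set \<Rightarrow> nat \<times> nat \<Rightarrow> nat \<times> nat" where
  "bishop m n F = sC m n F \<circ> sR m n F"

text \<open>A move function f is a solution to T(A): a permutation of F(A) forming a
  single cycle of length |F(A)|, i.e. every filled cell is reached from every
  other one by iterating f.\<close>
definition is_solution :: "(nat \<times> nat) set \<Rightarrow> (nat \<times> nat \<Rightarrow> nat \<times> nat) \<Rightarrow> bool" where
  "is_solution F f \<longleftrightarrow> bij_betw f F F \<and> (\<forall>x\<in>F. \<forall>y\<in>F. \<exists>k. (f ^^ k) x = y)"

end

theory Submission
  imports Defs "HOL-Number_Theory.Number_Theory"
begin

locale bsetup =
  fixes m n a b :: nat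
  assumes a0: "0 < a" and b0: "0 < b" and am: "a < m" and bn: "b < n"
    and gmn: "gcd m n = a + b" and gab: "gcd a b = 1"
begin

definition FF :: "(nat \<times> nat) set" where
  "FF = cells m n - {m - a..<m} \<times> {0..<b}"

abbreviation f where "f \<equiv> bishop m n FF"

lemma g_dvd_m: "a + b dvd m" using gmn by (metis gcd_dvd1)
lemma g_dvd_n: "a + b dvd n" using gmn by (metis gcd_dvd2)
lemma n0: "0 < n" using bn by simp
lemma m0: "0 < m" using am by simp
lemma n_ge: "a + b \<le> n" using g_dvd_n n0 by (simp add: dvd_imp_le)
lemma m_ge: "a + b \<le> m" using g_dvd_m m0 by (simp add: dvd_imp_le)

lemma memF: "(i,j) \<in> FF \<longleftrightarrow> i < m \<and> j < n \<and> \<not> (m - a \<le> i \<and> j < b)"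
  by (auto simp: FF_def cells_def)

lemma sR_formula:
  assumes "(i,j) \<in> FF"
  shows "sR m n FF (i,j) = (if m - a \<le> i \<and> j = n - 1 then (i,b) else (i, (j+1) mod n))"
proof (cases "m - a \<le> i \<and> j = n - 1")
  case True
  have L: "(LEAST t::nat. t \<ge> 1 \<and> (i, (j + t) mod n) \<in> FF) = b + 1"
  proof (rule Least_equality)
    have eq: "j + (b+1) = n + b" using True n0 by simp
    have "(j + (b+1)) mod n = (n + b) mod n" by (simp only: eq)
    then have "(j + (b+1)) mod n = b" using bn by simp
    then show "b + 1 \<ge> 1 \<and> (i, (j + (b+1)) mod n) \<in> FF" using assms bn by (auto simp: memF)
  next
    fix t assume t: "t \<ge> 1 \<and> (i, (j + t) mod n) \<in> FF"
    show "b + 1 \<le> t"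
    proof (rule ccontr)
      assume "\<not> b + 1 \<le> t"
      then have "t \<le> b" by simp
      have eq: "j + t = n + (t - 1)" using True t n0 by simp
      have "(j + t) mod n = (n + (t - 1)) mod n" by (simp only: eq)
      then have "(j + t) mod n = t - 1" using \<open>t \<le> b\<close> bn by simp
      then show False using t True \<open>t \<le> b\<close> by (auto simp: memF)
    qed
  qed
  have eq: "j + (b+1) = n + b" using True n0 by simp
  have "(j + (b+1)) mod n = (n + b) mod n" by (simp only: eq)
  then have "(j + (b+1)) mod n = b" using bn by simp
  then show ?thesis using True L unfolding sR_def by simp
next
  case False
  have L: "(LEAST t::nat. t \<ge> 1 \<and> (i, (j + t) mod n) \<in> FF) = 1"
  proof (rule Least_equality)
    show "1 \<ge> (1::nat) \<and> (i, (j + 1) mod n) \<in> FF"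
    proof -
      have "(j+1) mod n < n" using n0 by simp
      moreover have "\<not> (m - a \<le> i \<and> (j+1) mod n < b)"
      proof
        assume h: "m - a \<le> i \<and> (j+1) mod n < b"
        then have "j \<noteq> n - 1" using False by simp
        then have "j + 1 < n" using assms by (auto simp: memF)
        then have "(j+1) mod n = j + 1" by simp
        then show False using h assms by (auto simp: memF)
      qed
      ultimately show ?thesis using assms by (auto simp: memF)
    qed
  qed simp
  show ?thesis using False L unfolding sR_def by auto
qed

lemma sR_in:
  assumes "(i,j) \<in> FF" shows "sR m n FF (i,j) \<in> FF"
proof (cases "m - a \<le> i \<and> j = n - 1")
  case True then show ?thesis using sR_formula[OF assms] assms bn by (auto simp: memF)
next
  case False
  have "(j+1) mod n < n" using n0 by simp
  moreover have "\<not> (m - a \<le> i \<and> (j+1) mod n < b)"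
  proof
    assume h: "m - a \<le> i \<and> (j+1) mod n < b"
    then have "j \<noteq> n - 1" using False by simp
    then have "j + 1 < n" using assms by (auto simp: memF)
    then have "(j+1) mod n = j + 1" by simp
    then show False using h assms by (auto simp: memF)
  qed
  ultimately show ?thesis using sR_formula[OF assms] False assms by (auto simp: memF)
qed

lemma sC_formula:
  assumes "(i,j) \<in> FF"
  shows "sC m n FF (i,j) = (if j < b \<and> i = m - a - 1 then (0,j) else ((i+1) mod m, j))"
proof (cases "j < b \<and> i = m - a - 1")
  case True
  have L: "(LEAST t::nat. t \<ge> 1 \<and> ((i + t) mod m, j) \<in> FF) = a + 1"
  proof (rule Least_equality)
    have eq: "i + (a+1) = m" using True am by simp
    have "(i + (a+1)) mod m = 0" by (simp only: eq mod_self)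
    then show "a + 1 \<ge> 1 \<and> ((i + (a+1)) mod m, j) \<in> FF" using assms am by (auto simp: memF)
  next
    fix t assume t: "t \<ge> 1 \<and> ((i + t) mod m, j) \<in> FF"
    show "a + 1 \<le> t"
    proof (rule ccontr)
      assume "\<not> a + 1 \<le> t"
      then have "t \<le> a" by simp
      then have "i + t < m" using True t am by simp
      then have "(i + t) mod m = i + t" by simp
      then show False using t True \<open>t \<le> a\<close> am by (auto simp: memF)
    qed
  qed
  have eq: "i + (a+1) = m" using True am by simp
  have "(i + (a+1)) mod m = 0" by (simp only: eq mod_self)
  then show ?thesis using True L unfolding sC_def by simp
next
  case False
  have L: "(LEAST t::nat. t \<ge> 1 \<and> ((i + t) mod m, j) \<in> FF) = 1"
  proof (rule Least_equality)
    show "1 \<ge> (1::nat) \<and> ((i + 1) mod m, j) \<in> FF"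
    proof (cases "i + 1 = m")
      case True
      then show ?thesis using assms am by (auto simp: memF)
    next
      case F2: False
      then have "i + 1 < m" using assms by (auto simp: memF)
      then show ?thesis using assms False by (auto simp: memF)
    qed
  qed simp
  show ?thesis using False L unfolding sC_def by auto
qed

definition bj :: "nat \<Rightarrow> nat \<Rightarrow> nat" where
  "bj i j = (if m - a \<le> i \<and> j = n - 1 then b else (j+1) mod n)"
definition bi :: "nat \<Rightarrow> nat \<Rightarrow> nat" where
  "bi i j = (if bj i j < b \<and> i = m - a - 1 then 0 else (i+1) mod m)"

lemma f_formula:
  assumes "(i,j) \<in> FF" shows "f (i,j) = (bi i j, bj i j)"
proof -
  have r: "sR m n FF (i,j) = (i, bj i j)" using sR_formula[OF assms] by (simp add: bj_def)
  have "(i, bj i j) \<in> FF" using sR_in[OF assms] r by simp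
  from sC_formula[OF this] r show ?thesis by (auto simp: bishop_def bi_def)
qed

lemma f_in: assumes "x \<in> FF" shows "f x \<in> FF"
proof -
  obtain i j where x: "x = (i,j)" by force
  have "sR m n FF (i,j) \<in> FF" using sR_in assms x by simp
  moreover obtain i' j' where "sR m n FF (i,j) = (i',j')" by force
  ultimately have "sC m n FF (sR m n FF (i,j)) \<in> FF"
    using sC_formula[of i' j'] m0 by (auto simp: memF split: if_splits)
  then show ?thesis using x by (simp add: bishop_def)
qed

lemma fpow_in: "x \<in> FF \<Longrightarrow> (f ^^ k) x \<in> FF"
  by (induction k) (auto simp: f_in)


lemma modpred: "j < n \<Longrightarrow> ((j + n - 1) mod n + 1) mod n = j"
proof -
  assume j: "j < n"
  have "((j + n - 1) mod n + 1) mod n = ((j + n - 1) + 1) mod n" by (simp add: mod_Suc_eq)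
  also have "(j + n - 1) + 1 = j + n" using n0 by simp
  finally show ?thesis using j by simp
qed

lemma pred_ex:
  assumes y: "(i,j) \<in> FF"
  shows "\<exists>p\<in>FF. f p = (i,j) \<and> (i \<ge> 1 \<longrightarrow> fst p = i - 1)"
proof -
  have i: "i < m" and j: "j < n" and nr: "\<not> (m - a \<le> i \<and> j < b)" using y by (auto simp: memF)
  have jm: "(j + n - 1) mod n < n" using n0 by simp
  consider (A) "i = 0" "j < b" | (B) "i = 0" "b \<le> j" | (C) "1 \<le> i" "i < m - a"
    | (D) "i = m - a" | (E) "m - a < i" by linarith
  then show ?thesis
  proof cases
    case A
    let ?p = "(m - a - 1, (j + n - 1) mod n)"
    have pF: "?p \<in> FF" using jm am by (auto simp: memF)
    have nR: "\<not> m - a \<le> m - a - 1" using am by simp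
    have "bj (m - a - 1) ((j + n - 1) mod n) = j" using modpred[OF j] nR by (simp add: bj_def)
    then have "f ?p = (i,j)" using f_formula[OF pF] A by (simp add: bi_def)
    then show ?thesis using pF A by (intro bexI[of _ ?p]) auto
  next
    case B
    let ?p = "(m - 1, if j = b then n - 1 else j - 1)"
    have pF: "?p \<in> FF" using B j n0 am bn by (auto simp: memF)
    have R: "m - a \<le> m - 1" using a0 by simp
    have "bj (m - 1) (if j = b then n - 1 else j - 1) = j"
    proof (cases "j = b")
      case True then show ?thesis using R n0 bn by (simp add: bj_def)
    next
      case False
      then have "j - 1 \<noteq> n - 1" "j - 1 + 1 = j" using B j b0 by auto
      then show ?thesis using False j by (simp add: bj_def)
    qed
    moreover have "m - 1 \<noteq> m - a - 1" using a0 am by simp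
    ultimately have "f ?p = (i,j)" using f_formula[OF pF] B am by (simp add: bi_def)
    then show ?thesis using pF B by (intro bexI[of _ ?p]) auto
  next
    case C
    let ?p = "(i - 1, (j + n - 1) mod n)"
    have pF: "?p \<in> FF" using jm C i by (auto simp: memF)
    have nR: "\<not> m - a \<le> i - 1" using C by simp
    have "bj (i - 1) ((j + n - 1) mod n) = j" using modpred[OF j] nR by (simp add: bj_def)
    moreover have "i - 1 \<noteq> m - a - 1" using C by simp
    ultimately have "f ?p = (i,j)" using f_formula[OF pF] C i by (simp add: bi_def)
    then show ?thesis using pF C by (intro bexI[of _ ?p]) auto
  next
    case D
    then have jb: "b \<le> j" using nr by simp
    let ?p = "(m - a - 1, j - 1)"
    have pF: "?p \<in> FF" using D j am by (auto simp: memF)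
    have nR: "\<not> m - a \<le> m - a - 1" using am by simp
    have "j - 1 + 1 = j" using jb b0 by simp
    then have "bj (m - a - 1) (j - 1) = j" using nR j by (simp add: bj_def)
    moreover have "(m - a - 1 + 1) mod m = m - a" using am a0 by simp
    ultimately have "f ?p = (i,j)" using f_formula[OF pF] D jb am by (simp add: bi_def)
    then show ?thesis using pF D by (intro bexI[of _ ?p]) auto
  next
    case E
    then have jb: "b \<le> j" using nr by simp
    let ?p = "(i - 1, if j = b then n - 1 else j - 1)"
    have pF: "?p \<in> FF" using E jb j i n0 bn by (auto simp: memF)
    have R: "m - a \<le> i - 1" using E by simp
    have "bj (i - 1) (if j = b then n - 1 else j - 1) = j"
    proof (cases "j = b")
      case True then show ?thesis using R n0 bn by (simp add: bj_def)
    next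
      case False
      then have "j - 1 \<noteq> n - 1" "j - 1 + 1 = j" using jb j b0 by auto
      then show ?thesis using False j by (simp add: bj_def)
    qed
    moreover have "i - 1 \<noteq> m - a - 1" using E am by simp
    ultimately have "f ?p = (i,j)" using f_formula[OF pF] E i jb by (simp add: bi_def)
    then show ?thesis using pF E by (intro bexI[of _ ?p]) auto
  qed
qed

lemma reach0: "(i,j) \<in> FF \<Longrightarrow> \<exists>k j'. (f ^^ k) (i,j) = (0,j')"
proof (induction "m - i" arbitrary: i j rule: less_induct)
  case less
  show ?case
  proof (cases "i = 0")
    case True then show ?thesis by (rule_tac x=0 in exI) auto
  next
    case False
    have fi: "f (i,j) = (bi i j, bj i j)" using f_formula[OF less.prems] .
    have F1: "(bi i j, bj i j) \<in> FF" using f_in[OF less.prems] fi by simp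
    have i: "i < m" using less.prems by (auto simp: memF)
    show ?thesis
    proof (cases "bi i j = 0")
      case True
      then show ?thesis using fi by (rule_tac x=1 in exI) auto
    next
      case F: False
      then have b1: "bi i j = (i + 1) mod m" by (auto simp: bi_def split: if_splits)
      have "i + 1 \<noteq> m" using F b1 by auto
      then have "i + 1 < m" using i by simp
      then have "bi i j = i + 1" using b1 by simp
      then have "m - bi i j < m - i" using i by simp
      from less.hyps[OF this F1] obtain k j' where "(f ^^ k) (bi i j, bj i j) = (0, j')" by blast
      moreover have "(f ^^ (Suc k)) (i,j) = (f ^^ k) (f (i,j))" by (simp only: funpow_Suc_right comp_def)
      ultimately have "(f ^^ (Suc k)) (i,j) = (0,j')" using fi by simp
      then show ?thesis by blast
    qed
  qed
qed

lemma from0: "(i,j) \<in> FF \<Longrightarrow> \<exists>k j'. j' < n \<and> (f ^^ k) (0,j') = (i,j)"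
proof (induction i arbitrary: j)
  case 0
  then show ?case by (rule_tac x=0 in exI) (auto simp: memF)
next
  case (Suc i)
  obtain p where p: "p \<in> FF" "f p = (Suc i, j)" "fst p = i" using pred_ex[OF Suc.prems] by auto
  obtain j0 where "p = (i, j0)" using p(3) by (cases p) auto
  with Suc.IH p obtain k j' where "j' < n" "(f ^^ k) (0,j') = p" by metis
  then have "(f ^^ (Suc k)) (0,j') = (Suc i, j)" using p by simp
  then show ?case using \<open>j' < n\<close> by blast
qed



definition T :: "nat \<Rightarrow> nat" where
  "T j = (let u = (j + m) mod n in if u < a + b then (u + b) mod (a + b) else u)"

lemma Teq:
  assumes j: "j < n"
  shows "T j = (if (j + m - a) mod n < b then (j + m - a) mod n
                else b + ((j + m - a) mod n - b + a) mod (n - b))"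
proof -
  define c where "c = (j + m - a) mod n"
  have cn: "c < n" using n0 by (simp add: c_def)
  have "j + m = (j + m - a) + a" using am by simp
  then have "(j + m) mod n = ((j + m - a) + a) mod n" by simp
  also have "... = (c + a) mod n" by (simp add: c_def mod_add_left_eq)
  finally have u: "(j + m) mod n = (c + a) mod n" .
  consider (A) "c < b" | (B) "b \<le> c" "c + a < n" | (C) "n \<le> c + a" by linarith
  then show ?thesis
  proof cases
    case A
    then have "c + a < n" using n_ge by simp
    then have "(j + m) mod n = c + a" using u by simp
    moreover have "(c + a + b) mod (a + b) = c"
    proof -
      have "c + a + b = c + (a + b)" by simp
      then have "(c + a + b) mod (a + b) = c mod (a + b)" by (metis add.assoc mod_add_self2)
      then show ?thesis using A by simp
    qed
    ultimately show ?thesis using A by (simp add: T_def c_def[symmetric] Let_def)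
  next
    case B
    then have "(j + m) mod n = c + a" using u by simp
    moreover have "(c - b + a) mod (n - b) = c - b + a" using B by simp
    ultimately show ?thesis using B by (simp add: T_def c_def[symmetric] Let_def)
  next
    case C
    have ca: "c + a < 2 * n" using cn am n_ge by simp
    have "(c + a) mod n = (c + a - n) mod n" using C by (simp add: le_mod_geq)
    also have "... = c + a - n" using ca by simp
    finally have uu: "(j + m) mod n = c + a - n" using u by simp
    have lt: "c + a - n < a + b" using cn b0 by simp
    have cb: "\<not> c < b" using C n_ge by simp
    have "(c - b + a) mod (n - b) = (c - b + a - (n - b)) mod (n - b)"
      using C bn by (simp add: le_mod_geq)
    also have "... = c - b + a - (n - b)" using cn n_ge bn by simp
    finally have r: "b + (c - b + a) mod (n - b) = c + a - n + b" using C bn cb by simp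
    have "c + a - n + b < a + b" using cn a0 by simp
    then have "(c + a - n + b) mod (a + b) = c + a - n + b" by simp
    then show ?thesis using uu lt r cb by (simp add: T_def c_def[symmetric] Let_def)
  qed
qed

lemma S1: "j < n \<Longrightarrow> k \<le> m - a - 1 \<Longrightarrow> (f ^^ k) (0,j) = (k, (j + k) mod n)"
proof (induction k)
  case 0 then show ?case by simp
next
  case (Suc k)
  then have IH: "(f ^^ k) (0,j) = (k, (j + k) mod n)" by simp
  have kF: "(k, (j + k) mod n) \<in> FF" using Suc.prems n0 am by (auto simp: memF)
  have nR: "\<not> m - a \<le> k" using Suc.prems by simp
  have bj: "bj k ((j + k) mod n) = (j + Suc k) mod n" using nR by (simp add: bj_def mod_Suc_eq)
  have "k \<noteq> m - a - 1" using Suc.prems by simp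
  moreover have "Suc k < m" using Suc.prems am by simp
  ultimately have bi: "bi k ((j + k) mod n) = Suc k" by (simp add: bi_def)
  show ?case using IH f_formula[OF kF] bj bi by simp
qed

lemma S3:
  assumes c: "b \<le> c" "c < n"
  shows "k \<le> a \<Longrightarrow> (f ^^ k) (m - a, c) = (if k = a then 0 else m - a + k, b + (c - b + k) mod (n - b))"
proof (induction k)
  case 0
  have "(c - b) mod (n - b) = c - b" using c by simp
  then show ?case using a0 c by simp
next
  case (Suc k)
  then have IH: "(f ^^ k) (m - a, c) = (m - a + k, b + (c - b + k) mod (n - b))" by simp
  define y where "y = (c - b + k) mod (n - b)"
  have y: "y < n - b" using bn by (simp add: y_def)
  have kF: "(m - a + k, b + y) \<in> FF" using Suc.prems y am by (auto simp: memF)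
  have R: "m - a \<le> m - a + k" by simp
  have bj: "bj (m - a + k) (b + y) = b + (c - b + Suc k) mod (n - b)"
  proof (cases "b + y = n - 1")
    case True
    then have "Suc y = n - b" using bn by simp
    then have "(c - b + Suc k) mod (n - b) = 0" by (simp add: y_def mod_Suc)
    then show ?thesis using True R by (simp add: bj_def)
  next
    case False
    then have "Suc y \<noteq> n - b" "b + y + 1 < n" using y by auto
    then have "(c - b + Suc k) mod (n - b) = Suc y" by (simp add: y_def mod_Suc)
    then show ?thesis using False \<open>b + y + 1 < n\<close> by (simp add: bj_def)
  qed
  have "m - a + k \<noteq> m - a - 1" using am by simp
  then have bi: "bi (m - a + k) (b + y) = (m - a + k + 1) mod m" by (simp add: bi_def bj)
  have "(m - a + k + 1) mod m = (if Suc k = a then 0 else m - a + Suc k)"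
  proof (cases "Suc k = a")
    case True then have e: "m - a + k + 1 = m" using am by simp
    have "(m - a + k + 1) mod m = 0" by (simp only: e mod_self)
    then show ?thesis using True by simp
  next
    case False then have "m - a + k + 1 < m" using Suc.prems am by simp
    then show ?thesis using False by simp
  qed
  then show ?case using IH f_formula[OF kF] bj bi y_def by simp
qed


lemma Ret: assumes j: "j < n" shows "\<exists>k. (f ^^ k) (0,j) = (0, T j)"
proof -
  define c where "c = (j + m - a) mod n"
  have cn: "c < n" using n0 by (simp add: c_def)
  have ma: "m - a \<ge> 1" using am by simp
  have P1: "(f ^^ (m - a - 1)) (0,j) = (m - a - 1, (j + (m - a - 1)) mod n)" using S1[OF j] by simp
  have pF: "(m - a - 1, (j + (m - a - 1)) mod n) \<in> FF" using n0 am by (auto simp: memF)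
  have nR: "\<not> m - a \<le> m - a - 1" using am by simp
  have e: "j + (m - a - 1) + 1 = j + m - a" using ma by simp
  have bj: "bj (m - a - 1) ((j + (m - a - 1)) mod n) = c"
  proof -
    have "bj (m - a - 1) ((j + (m - a - 1)) mod n) = ((j + (m - a - 1)) mod n + 1) mod n"
      using nR by (simp add: bj_def)
    also have "... = (j + (m - a - 1) + 1) mod n" by (simp add: mod_Suc_eq)
    also have "... = c" by (simp only: e c_def)
    finally show ?thesis .
  qed
  have "(m - a - 1 + 1) mod m = m - a" using ma am a0 by simp
  then have bi: "bi (m - a - 1) ((j + (m - a - 1)) mod n) = (if c < b then 0 else m - a)"
    using bj by (simp add: bi_def)
  have sm: "Suc (m - a - 1) = m - a" using ma by simp
  have "(f ^^ (m - a)) (0,j) = (f ^^ (Suc (m - a - 1))) (0,j)" by (simp only: sm)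
  also have "... = f ((f ^^ (m - a - 1)) (0,j))" by simp
  also have "... = (if c < b then 0 else m - a, c)" using P1 f_formula[OF pF] bj bi by simp
  finally have P2: "(f ^^ (m - a)) (0,j) = (if c < b then 0 else m - a, c)" .
  show ?thesis
  proof (cases "c < b")
    case True
    then show ?thesis using P2 Teq[OF j] by (auto simp: c_def)
  next
    case False
    have "(f ^^ (a + (m - a))) (0,j) = (f ^^ a) ((f ^^ (m - a)) (0,j))" by (simp add: funpow_add)
    also have "... = (f ^^ a) (m - a, c)" using P2 False by simp
    also have "... = (0, b + (c - b + a) mod (n - b))" using S3[of c a] False cn by simp
    also have "... = (0, T j)" using Teq[OF j] False by (simp add: c_def)
    finally show ?thesis by blast
  qed
qed



end

lemma rot_reach:
  fixes m n j y :: nat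
  assumes n: "0 < n" and j: "j < n" and y: "y < n" and c: "j mod gcd m n = y mod gcd m n"
  shows "\<exists>k. (j + k * m) mod n = y"
proof -
  define d where "d = gcd m n"
  define D where "D = y + n - j"
  have dn: "d dvd n" by (simp add: d_def)
  obtain q where q: "n = d * q" using dn by (auto elim: dvdE)
  have "(y + n) mod d = y mod d" unfolding q by simp
  then have "(y + n) mod d = j mod d" using c by (simp add: d_def)
  then have "d dvd D" unfolding D_def using j by (simp add: mod_eq_dvd_iff_nat)
  then obtain x where x: "[m * x = D] (mod n)" using cong_solve_dvd_nat[of m n D] by (auto simp: d_def)
  have "(j + x * m) mod n = (j + (m * x) mod n) mod n" by (simp add: mod_add_right_eq mult.commute)
  also have "... = (j + D mod n) mod n" using x by (simp add: cong_def)
  also have "... = (j + D) mod n" by (simp add: mod_add_right_eq)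
  also have "j + D = y + n" using j by (simp add: D_def)
  also have "(y + n) mod n = y" using y by simp
  finally show ?thesis by blast
qed

context bsetup begin

definition ex :: "nat \<Rightarrow> bool" where "ex j \<longleftrightarrow> (j + m) mod n < a + b"

lemma modg: "x mod n mod (a + b) = x mod (a + b)"
  using g_dvd_n by (simp add: mod_mod_cancel)

lemma cls: "(j + k * m) mod n mod (a + b) = j mod (a + b)"
proof -
  obtain q where q: "m = (a + b) * q" using g_dvd_m by (auto elim: dvdE)
  have "k * m = (a + b) * (k * q)" unfolding q by (simp add: algebra_simps)
  then have "(j + k * m) mod (a + b) = (j + (a + b) * (k * q)) mod (a + b)" by (simp only:)
  also have "... = j mod (a + b)" by simp
  finally have "(j + k * m) mod (a + b) = j mod (a + b)" .
  then show ?thesis by (simp add: modg)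
qed

lemma cls1: "(j + m) mod n mod (a + b) = j mod (a + b)"
  using cls[of j 1] by simp

lemma T_lt: "j < n \<Longrightarrow> T j < n"
proof -
  have "(j + m) mod n < n" using n0 by simp
  moreover have "((j + m) mod n + b) mod (a + b) < a + b" using a0 by simp
  then have "((j + m) mod n + b) mod (a + b) < n" using n_ge by linarith
  ultimately show "T j < n" by (simp add: T_def Let_def)
qed

lemma T_nonex: "\<not> ex j \<Longrightarrow> T j = (j + m) mod n"
  by (simp add: T_def ex_def Let_def)

lemma T_ex_cls: "ex j \<Longrightarrow> T j mod (a + b) = (j + b) mod (a + b)"
proof -
  assume e: "ex j"
  have "T j = ((j + m) mod n + b) mod (a + b)" using e by (simp add: T_def ex_def Let_def)
  then have "T j mod (a + b) = ((j + m) mod n + b) mod (a + b)" by simp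
  also have "... = ((j + m) mod n mod (a + b) + b) mod (a + b)" by (simp add: mod_add_left_eq)
  also have "... = (j mod (a + b) + b) mod (a + b)" by (simp add: cls1)
  also have "... = (j + b) mod (a + b)" by (simp add: mod_add_left_eq)
  finally show ?thesis .
qed

lemma ex_uniq:
  assumes "x < n" "x' < n" "ex x" "ex x'" "x mod (a + b) = x' mod (a + b)"
  shows "x = x'"
proof -
  have u: "(x + m) mod n = (x + m) mod n mod (a + b)" using assms(3) by (simp add: ex_def)
  have u': "(x' + m) mod n = (x' + m) mod n mod (a + b)" using assms(4) by (simp add: ex_def)
  have "(x + m) mod n = (x' + m) mod n" using u u' assms(5) by (simp add: cls1)
  then have "[x + m = x' + m] (mod n)" by (simp add: cong_def)
  then have "[x = x'] (mod n)" by (simp add: cong_add_rcancel_nat)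
  then show ?thesis using assms(1,2) by (simp add: cong_def)
qed

lemma ex_pre:
  assumes "u < n" shows "\<exists>x<n. (x + m) mod n = u"
proof -
  define x where "x = (u + (n - m mod n)) mod n"
  have "x < n" using n0 by (simp add: x_def)
  have "(x + m) mod n = (u + (n - m mod n) + m) mod n" by (simp add: x_def mod_add_left_eq)
  also have "... = (u + (n - m mod n) + m mod n) mod n" by (simp add: mod_add_right_eq)
  also have "u + (n - m mod n) + m mod n = u + n"
  proof -
    have "m mod n < n" using n0 by simp
    then show ?thesis by simp
  qed
  finally show ?thesis using assms \<open>x < n\<close> by auto
qed

lemma ex_exists: "\<exists>x<n. ex x \<and> x mod (a + b) = r mod (a + b)"
proof -
  define u where "u = r mod (a + b)"
  have ug: "u < a + b" using a0 by (simp add: u_def)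
  then have "u < n" using n_ge by simp
  then obtain x where x: "x < n" "(x + m) mod n = u" using ex_pre by blast
  have "ex x" using x ug by (simp add: ex_def)
  moreover have "x mod (a + b) = u" using cls1[of x] x ug by simp
  ultimately show ?thesis using x u_def by auto
qed

lemma walk: "j < n \<Longrightarrow> (\<forall>i<K. \<not> ex ((j + i * m) mod n)) \<Longrightarrow> (T ^^ K) j = (j + K * m) mod n"
proof (induction K)
  case 0 then show ?case by simp
next
  case (Suc K)
  then have "(T ^^ K) j = (j + K * m) mod n" by simp
  moreover have "\<not> ex ((j + K * m) mod n)" using Suc.prems by simp
  ultimately have "(T ^^ Suc K) j = ((j + K * m) mod n + m) mod n" by (simp add: T_nonex)
  also have "... = ((j + K * m) + m) mod n" by (rule mod_add_left_eq)
  also have "(j + K * m) + m = j + Suc K * m" by simp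
  finally show ?case .
qed

lemma to_exit:
  assumes j: "j < n"
  shows "\<exists>k x. (T ^^ k) j = x \<and> x < n \<and> ex x \<and> x mod (a + b) = j mod (a + b)"
proof -
  obtain x where x: "x < n" "ex x" "x mod (a + b) = j mod (a + b)" using ex_exists by blast
  have "\<exists>k. (j + k * m) mod n = x" using rot_reach[OF n0 j x(1)] x(3) gmn by simp
  define K where "K = (LEAST k. (j + k * m) mod n = x)"
  have K: "(j + K * m) mod n = x" unfolding K_def by (rule LeastI_ex) fact
  have "\<forall>i<K. \<not> ex ((j + i * m) mod n)"
  proof (intro allI impI)
    fix i assume i: "i < K"
    show "\<not> ex ((j + i * m) mod n)"
    proof
      assume e: "ex ((j + i * m) mod n)"
      have "(j + i * m) mod n < n" using n0 by simp
      then have "(j + i * m) mod n = x" using ex_uniq[OF _ x(1) e x(2)] cls x(3) by simp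
      then have "K \<le> i" unfolding K_def by (rule Least_le)
      then show False using i by simp
    qed
  qed
  then have "(T ^^ K) j = x" using walk[OF j] K by simp
  then show ?thesis using x by blast
qed

lemma from_exit:
  assumes x: "x < n" "ex x" and y: "y < n" "y mod (a + b) = T x mod (a + b)"
  shows "\<exists>k. (T ^^ k) (T x) = y"
proof -
  define e where "e = T x"
  have e: "e = ((x + m) mod n + b) mod (a + b)" using x by (simp add: e_def T_def ex_def Let_def)
  have eg: "e < a + b" using e a0 by simp
  then have en: "e < n" using n_ge by simp
  obtain x2 where x2: "x2 < n" "(x2 + m) mod n = e" using ex_pre[OF en] by blast
  have x2e: "ex x2" using x2 eg by (simp add: ex_def)
  have x2c: "x2 mod (a + b) = e mod (a + b)" using cls1[of x2] x2 by simp
  have "\<exists>k. (e + k * m) mod n = y" using rot_reach[OF n0 en y(1)] y(2) gmn by (simp add: e_def)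
  define K where "K = (LEAST k. (e + k * m) mod n = y)"
  have K: "(e + K * m) mod n = y" unfolding K_def by (rule LeastI_ex) fact
  have "\<forall>i<K. \<not> ex ((e + i * m) mod n)"
  proof (intro allI impI)
    fix i assume i: "i < K"
    show "\<not> ex ((e + i * m) mod n)"
    proof
      assume ee: "ex ((e + i * m) mod n)"
      have "(e + i * m) mod n < n" using n0 by simp
      then have eq: "(e + i * m) mod n = x2" using ex_uniq[OF _ x2(1) ee x2e] cls x2c by simp
      have ee1: "e + Suc i * m = (e + i * m) + m" by simp
      have "(e + Suc i * m) mod n = ((e + i * m) + m) mod n" by (simp only: ee1)
      also have "... = ((e + i * m) mod n + m) mod n" by (rule mod_add_left_eq[symmetric])
      also have "... = e" using eq x2 by simp
      finally have es: "(e + Suc i * m) mod n = e" .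
      have "(e + (K - Suc i) * m) mod n = ((e + Suc i * m) mod n + (K - Suc i) * m) mod n"
        using es by simp
      also have "... = (e + Suc i * m + (K - Suc i) * m) mod n" by (simp add: mod_add_left_eq)
      also have "e + Suc i * m + (K - Suc i) * m = e + K * m"
      proof -
        have "e + Suc i * m + (K - Suc i) * m = e + (Suc i + (K - Suc i)) * m" by (simp add: add_mult_distrib)
        also have "Suc i + (K - Suc i) = K" using i by simp
        finally show ?thesis .
      qed
      finally have "(e + (K - Suc i) * m) mod n = y" using K by simp
      then have "K \<le> K - Suc i" unfolding K_def by (rule Least_le)
      then show False using i by simp
    qed
  qed
  then have "(T ^^ K) e = y" using walk[OF en] K by simp
  then show ?thesis unfolding e_def by blast
qed

end
context bsetup begin

definition X :: "nat \<Rightarrow> nat" where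
  "X r = (SOME x. x < n \<and> ex x \<and> x mod (a + b) = r mod (a + b))"

lemma X: "X r < n \<and> ex (X r) \<and> X r mod (a + b) = r mod (a + b)"
  unfolding X_def by (rule someI_ex) (rule ex_exists)

lemma X_cong: "r mod (a + b) = r' mod (a + b) \<Longrightarrow> X r = X r'"
  by (simp add: X_def)

lemma Tpow_trans: "(T ^^ k1) x = y \<Longrightarrow> (T ^^ k2) y = z \<Longrightarrow> (T ^^ (k2 + k1)) x = z"
  by (simp add: funpow_add)

lemma stepA: "j < n \<Longrightarrow> \<exists>k. (T ^^ k) j = X j"
proof -
  assume j: "j < n"
  obtain k x where kx: "(T ^^ k) j = x" "x < n" "ex x" "x mod (a + b) = j mod (a + b)"
    using to_exit[OF j] by blast
  have "x = X j" using ex_uniq[OF kx(2) _ kx(3)] X kx(4) by simp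
  then show ?thesis using kx(1) by blast
qed

lemma T_X_cls: "T (X r) mod (a + b) = (r + b) mod (a + b)"
proof -
  have "T (X r) mod (a + b) = (X r + b) mod (a + b)" using T_ex_cls X by simp
  also have "... = (X r mod (a + b) + b) mod (a + b)" by (simp add: mod_add_left_eq)
  also have "... = (r mod (a + b) + b) mod (a + b)" using X by simp
  also have "... = (r + b) mod (a + b)" by (simp add: mod_add_left_eq)
  finally show ?thesis .
qed

lemma from_X: "y < n \<Longrightarrow> y mod (a + b) = (r + b) mod (a + b) \<Longrightarrow> \<exists>k. (T ^^ k) (X r) = y"
proof -
  assume y: "y < n" "y mod (a + b) = (r + b) mod (a + b)"
  have "\<exists>k. (T ^^ k) (T (X r)) = y" using from_exit[of "X r" y] X y T_X_cls by simp
  then obtain k where "(T ^^ k) (T (X r)) = y" by blast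
  moreover have "(T ^^ Suc k) (X r) = (T ^^ k) (T (X r))" by (simp only: funpow_Suc_right comp_def)
  ultimately show ?thesis by (intro exI[of _ "Suc k"]) simp
qed

lemma stepB: "\<exists>k. (T ^^ k) (X r) = X (r + b)"
  using from_X[of "X (r + b)" r] X by simp

lemma stepC: "\<exists>k. (T ^^ k) (X r) = X (r + t * b)"
proof (induction t)
  case 0 then show ?case by (rule_tac x=0 in exI) simp
next
  case (Suc t)
  then obtain k1 where k1: "(T ^^ k1) (X r) = X (r + t * b)" by blast
  obtain k2 where k2: "(T ^^ k2) (X (r + t * b)) = X (r + t * b + b)" using stepB by blast
  have e: "r + t * b + b = r + Suc t * b" by simp
  have "(T ^^ (k2 + k1)) (X r) = X (r + Suc t * b)" using Tpow_trans[OF k1 k2] unfolding e .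
  then show ?case by blast
qed

lemma gcd_bg: "gcd b (a + b) = 1"
proof -
  have "gcd b (a + b) = gcd b (b + a)" by (simp add: add.commute)
  also have "... = gcd b a" by (rule gcd_add2)
  also have "... = 1" using gab by (simp add: gcd.commute)
  finally show ?thesis .
qed

theorem T_cycle: "j < n \<Longrightarrow> y < n \<Longrightarrow> \<exists>k. (T ^^ k) j = y"
proof -
  assume j: "j < n" and y: "y < n"
  define g where "g = a + b"
  have g0: "0 < g" using a0 by (simp add: g_def)
  define q where "q = y mod g + (g - b)"
  have qb: "(q + b) mod g = y mod g"
  proof -
    have "q + b = y mod g + g" using bn by (simp add: q_def g_def)
    then show ?thesis by simp
  qed
  have "\<exists>t. (j mod g + t * b) mod g = q mod g"
    using rot_reach[of g "j mod g" "q mod g" b] g0 gcd_bg by (simp add: g_def)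
  then obtain t where t: "(j mod g + t * b) mod g = q mod g" by blast
  have "(j + t * b) mod g = q mod g" using t by (simp add: mod_add_left_eq)
  then have Xq: "X (j + t * b) = X q" using X_cong[of "j + t * b" q] unfolding g_def by blast
  obtain k1 where k1: "(T ^^ k1) j = X j" using stepA[OF j] by blast
  obtain k2 where k2: "(T ^^ k2) (X j) = X q" using stepC[of j t] Xq by auto
  have qb': "y mod (a + b) = (q + b) mod (a + b)" using qb unfolding g_def by simp
  obtain k3 where k3: "(T ^^ k3) (X q) = y" using from_X[OF y qb'] by blast
  show ?thesis using Tpow_trans[OF Tpow_trans[OF k1 k2] k3] by blast
qed

lemma Tpow_lt: "j < n \<Longrightarrow> (T ^^ t) j < n"
  by (induction t) (auto simp: T_lt)

lemma lift: "j < n \<Longrightarrow> \<exists>k. (f ^^ k) (0, j) = (0, (T ^^ t) j)"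
proof (induction t)
  case 0 then show ?case by (rule_tac x=0 in exI) simp
next
  case (Suc t)
  then obtain k where k: "(f ^^ k) (0, j) = (0, (T ^^ t) j)" by blast
  obtain k' where k': "(f ^^ k') (0, (T ^^ t) j) = (0, T ((T ^^ t) j))"
    using Ret[OF Tpow_lt[OF Suc.prems]] by blast
  have "(f ^^ (k' + k)) (0, j) = (0, (T ^^ Suc t) j)" using k k' by (simp add: funpow_add)
  then show ?case by blast
qed

theorem sol: "is_solution FF f"
proof -
  have fin: "finite FF" unfolding FF_def cells_def by simp
  have img: "f ` FF \<subseteq> FF" using f_in by auto
  have sur: "FF \<subseteq> f ` FF"
  proof
    fix y assume y: "y \<in> FF"
    obtain i j where "y = (i,j)" by force
    then obtain p where "p \<in> FF" "f p = y" using pred_ex[of i j] y by auto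
    then show "y \<in> f ` FF" by (auto intro: image_eqI[of y f p])
  qed
  have inj: "inj_on f FF" by (rule finite_surj_inj[OF fin sur])
  have bij: "bij_betw f FF FF" unfolding bij_betw_def using inj img sur by blast
  have reach: "\<exists>k. (f ^^ k) x = y" if x: "x \<in> FF" and y: "y \<in> FF" for x y
  proof -
    obtain i j where xij: "x = (i,j)" by force
    obtain k1 j1 where k1: "(f ^^ k1) x = (0, j1)" using reach0[of i j] x xij by blast
    have "(0, j1) \<in> FF" using fpow_in[OF x, of k1] k1 by simp
    then have j1: "j1 < n" by (simp add: memF)
    obtain i2 j2 where yij: "y = (i2,j2)" by force
    obtain k3 j3 where j3: "j3 < n" and k3: "(f ^^ k3) (0, j3) = y" using from0[of i2 j2] y yij by blast
    obtain t where t: "(T ^^ t) j1 = j3" using T_cycle[OF j1 j3] by blast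
    obtain k2 where k2: "(f ^^ k2) (0, j1) = (0, j3)" using lift[OF j1, of t] t by blast
    have "(f ^^ (k3 + (k2 + k1))) x = y" using k1 k2 k3 by (simp add: funpow_add)
    then show ?thesis by blast
  qed
  show ?thesis unfolding is_solution_def using bij reach by blast
qed

end

definition tau :: "nat \<Rightarrow> nat \<Rightarrow> nat \<times> nat \<Rightarrow> nat \<times> nat" where
  "tau d n c = (fst c, (snd c + d) mod n)"

lemma tau_mem:
  assumes F: "F \<subseteq> cells m n" and n: "0 < n"
  shows "((i, (x + d) mod n) \<in> tau d n ` F) \<longleftrightarrow> ((i, x mod n) \<in> F)"
proof
  assume "(i, (x + d) mod n) \<in> tau d n ` F"
  then obtain i' j' where ij: "(i', j') \<in> F" "tau d n (i', j') = (i, (x + d) mod n)" by auto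
  then have "i' = i" "(j' + d) mod n = (x + d) mod n" by (auto simp: tau_def)
  then have "[j' = x] (mod n)" by (simp add: cong_def[symmetric] cong_add_rcancel_nat)
  moreover have "j' < n" using ij F by (auto simp: cells_def)
  ultimately have "j' = x mod n" by (simp add: cong_def)
  then show "(i, x mod n) \<in> F" using ij \<open>i' = i\<close> by simp
next
  assume "(i, x mod n) \<in> F"
  moreover have "tau d n (i, x mod n) = (i, (x + d) mod n)" by (simp add: tau_def mod_add_left_eq)
  ultimately show "(i, (x + d) mod n) \<in> tau d n ` F" by (metis image_eqI)
qed

lemma sR_tau:
  assumes F: "F \<subseteq> cells m n" and n: "0 < n"
  shows "sR m n (tau d n ` F) (tau d n (i, j)) = tau d n (sR m n F (i, j))"
proof -
  have P: "\<And>t. ((i, ((j + d) mod n + t) mod n) \<in> tau d n ` F) \<longleftrightarrow> ((i, (j + t) mod n) \<in> F)"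
  proof -
    fix t
    have "((j + d) mod n + t) mod n = (j + d + t) mod n" by (rule mod_add_left_eq)
    also have "j + d + t = (j + t) + d" by simp
    finally have "((j + d) mod n + t) mod n = ((j + t) + d) mod n" .
    then show "((i, ((j + d) mod n + t) mod n) \<in> tau d n ` F) \<longleftrightarrow> ((i, (j + t) mod n) \<in> F)"
      using tau_mem[OF F n, of i "j + t" d] by simp
  qed
  define t0 where "t0 = (LEAST t::nat. t \<ge> 1 \<and> (i, (j + t) mod n) \<in> F)"
  have L: "(LEAST t::nat. t \<ge> 1 \<and> (i, ((j + d) mod n + t) mod n) \<in> tau d n ` F) = t0"
    unfolding t0_def P ..
  have "((j + d) mod n + t0) mod n = (j + d + t0) mod n" by (rule mod_add_left_eq)
  also have "j + d + t0 = (j + t0) + d" by simp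
  also have "((j + t0) + d) mod n = ((j + t0) mod n + d) mod n" by (rule mod_add_left_eq[symmetric])
  finally have "((j + d) mod n + t0) mod n = ((j + t0) mod n + d) mod n" .
  then show ?thesis using L unfolding sR_def tau_def t0_def by (simp add: Let_def)
qed

lemma sC_tau:
  assumes F: "F \<subseteq> cells m n" and n: "0 < n" and j: "j < n"
  shows "sC m n (tau d n ` F) (tau d n (i, j)) = tau d n (sC m n F (i, j))"
proof -
  have P: "\<And>t. (((i + t) mod m, (j + d) mod n) \<in> tau d n ` F) \<longleftrightarrow> (((i + t) mod m, j) \<in> F)"
    using tau_mem[OF F n, of _ j d] j by simp
  define t0 where "t0 = (LEAST t::nat. t \<ge> 1 \<and> ((i + t) mod m, j) \<in> F)"
  have L: "(LEAST t::nat. t \<ge> 1 \<and> ((i + t) mod m, (j + d) mod n) \<in> tau d n ` F) = t0"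
    unfolding t0_def P ..
  show ?thesis using L unfolding sC_def tau_def t0_def by (simp add: Let_def)
qed

lemma bishop_tau:
  assumes F: "F \<subseteq> cells m n" and n: "0 < n" and c: "snd c < n"
  shows "bishop m n (tau d n ` F) (tau d n c) = tau d n (bishop m n F c)"
proof -
  obtain i j where c': "c = (i, j)" by force
  obtain i' j' where r: "sR m n F (i, j) = (i', j')" by force
  have j': "j' < n" using r n unfolding sR_def by (auto simp: Let_def)
  have "bishop m n (tau d n ` F) (tau d n c) = sC m n (tau d n ` F) (sR m n (tau d n ` F) (tau d n (i, j)))"
    by (simp add: bishop_def c')
  also have "... = sC m n (tau d n ` F) (tau d n (i', j'))" using sR_tau[OF F n] r by simp
  also have "... = tau d n (sC m n F (i', j'))" using sC_tau[OF F n j'] by simp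
  also have "... = tau d n (bishop m n F c)" using r by (simp add: bishop_def c')
  finally show ?thesis .
qed

lemma tau_inj: "inj_on (tau d n) (cells m n)"
proof (rule inj_onI)
  fix x y assume x: "x \<in> cells m n" and y: "y \<in> cells m n" and e: "tau d n x = tau d n y"
  then have "fst x = fst y" "(snd x + d) mod n = (snd y + d) mod n" by (auto simp: tau_def)
  then have "[snd x = snd y] (mod n)" by (simp add: cong_def[symmetric] cong_add_rcancel_nat)
  moreover have "snd x < n" "snd y < n" using x y by (auto simp: cells_def)
  ultimately have "snd x = snd y" by (simp add: cong_def)
  then show "x = y" using \<open>fst x = fst y\<close> by (simp add: prod_eq_iff)
qed

lemma sol_tau:
  assumes F: "F \<subseteq> cells m n" and n: "0 < n" and S: "is_solution F (bishop m n F)"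
  shows "is_solution (tau d n ` F) (bishop m n (tau d n ` F))"
proof -
  let ?g = "bishop m n F" and ?h = "bishop m n (tau d n ` F)" and ?t = "tau d n"
  have bij: "bij_betw ?g F F" and R: "\<forall>x\<in>F. \<forall>y\<in>F. \<exists>k. (?g ^^ k) x = y"
    using S by (auto simp: is_solution_def)
  have gF: "?g x \<in> F" if "x \<in> F" for x using bij that by (auto simp: bij_betw_def)
  have comm: "?h (?t x) = ?t (?g x)" if "x \<in> F" for x
    using bishop_tau[OF F n] that F by (auto simp: cells_def)
  have itc: "(?h ^^ k) (?t x) = ?t ((?g ^^ k) x)" if "x \<in> F" for x k
  proof (induction k)
    case 0 then show ?case by simp
  next
    case (Suc k)
    have "(?g ^^ k) x \<in> F" using that gF by (induction k) auto
    then show ?case using Suc comm by simp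
  qed
  have injt: "inj_on ?t F" using tau_inj F inj_on_subset by blast
  have img: "?h ` (?t ` F) = ?t ` F"
  proof -
    have "?h ` (?t ` F) = ?t ` (?g ` F)" using comm by (auto simp: image_image intro!: image_cong)
    also have "?g ` F = F" using bij by (simp add: bij_betw_def)
    finally show ?thesis .
  qed
  have injh: "inj_on ?h (?t ` F)"
  proof (rule inj_onI)
    fix u v assume u: "u \<in> ?t ` F" and v: "v \<in> ?t ` F" and e: "?h u = ?h v"
    obtain x where x: "x \<in> F" "u = ?t x" using u by blast
    obtain y where y: "y \<in> F" "v = ?t y" using v by blast
    have "?t (?g x) = ?t (?g y)" using e x y comm by simp
    then have "?g x = ?g y" using inj_onD[OF injt _ gF[OF x(1)] gF[OF y(1)]] by blast
    then have "x = y" using bij x(1) y(1) by (auto simp: bij_betw_def dest: inj_onD)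
    then show "u = v" using x y by simp
  qed
  have "bij_betw ?h (?t ` F) (?t ` F)" unfolding bij_betw_def using injh img by blast
  moreover have "\<forall>u\<in>?t ` F. \<forall>v\<in>?t ` F. \<exists>k. (?h ^^ k) u = v"
  proof (intro ballI)
    fix u v assume u: "u \<in> ?t ` F" and v: "v \<in> ?t ` F"
    obtain x where x: "x \<in> F" "u = ?t x" using u by blast
    obtain y where y: "y \<in> F" "v = ?t y" using v by blast
    obtain k where "(?g ^^ k) x = y" using R x y by blast
    then have "(?h ^^ k) u = v" using itc[OF x(1)] x y by simp
    then show "\<exists>k. (?h ^^ k) u = v" by blast
  qed
  ultimately show ?thesis by (simp add: is_solution_def)
qed

lemma shift_set:
  fixes m n a b :: nat
  assumes bn: "b < n"
  shows "cells m n - {m - a..<m} \<times> {n - b..<n} = tau (n - b) n ` (cells m n - {m - a..<m} \<times> {0..<b})"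
proof
  show "cells m n - {m - a..<m} \<times> {n - b..<n} \<subseteq> tau (n - b) n ` (cells m n - {m - a..<m} \<times> {0..<b})"
  proof
    fix c assume c: "c \<in> cells m n - {m - a..<m} \<times> {n - b..<n}"
    obtain i j where ij: "c = (i, j)" by force
    have i: "i < m" and j: "j < n" and nb: "\<not> (m - a \<le> i \<and> n - b \<le> j)" using c ij by (auto simp: cells_def)
    define j0 where "j0 = (j + b) mod n"
    have "(j0 + (n - b)) mod n = (j + b + (n - b)) mod n" by (simp add: j0_def mod_add_left_eq)
    also have "j + b + (n - b) = j + n" using bn by simp
    finally have tj: "(j0 + (n - b)) mod n = j" using j by simp
    have j0n: "j0 < n" using bn by (simp add: j0_def)
    have "\<not> (m - a \<le> i \<and> j0 < b)"
    proof
      assume h: "m - a \<le> i \<and> j0 < b"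
      then have "j < n - b" using nb by simp
      then have "j0 = j + b" by (simp add: j0_def)
      then show False using h by simp
    qed
    then have "(i, j0) \<in> cells m n - {m - a..<m} \<times> {0..<b}" using i j0n by (auto simp: cells_def)
    moreover have "tau (n - b) n (i, j0) = c" using tj ij by (simp add: tau_def)
    ultimately show "c \<in> tau (n - b) n ` (cells m n - {m - a..<m} \<times> {0..<b})" by (metis image_eqI)
  qed
next
  show "tau (n - b) n ` (cells m n - {m - a..<m} \<times> {0..<b}) \<subseteq> cells m n - {m - a..<m} \<times> {n - b..<n}"
  proof
    fix c assume "c \<in> tau (n - b) n ` (cells m n - {m - a..<m} \<times> {0..<b})"
    then obtain p where p: "p \<in> cells m n - {m - a..<m} \<times> {0..<b}" "c = tau (n - b) n p" by blast
    obtain i j where "p = (i, j)" by force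
    then have ij: "(i, j) \<in> cells m n - {m - a..<m} \<times> {0..<b}" "c = tau (n - b) n (i, j)" using p by auto
    have i: "i < m" and j: "j < n" and nb: "\<not> (m - a \<le> i \<and> j < b)" using ij by (auto simp: cells_def)
    have c: "c = (i, (j + (n - b)) mod n)" using ij by (simp add: tau_def)
    have "\<not> (m - a \<le> i \<and> n - b \<le> (j + (n - b)) mod n)"
    proof
      assume h: "m - a \<le> i \<and> n - b \<le> (j + (n - b)) mod n"
      then have jb: "b \<le> j" using nb by simp
      then have e: "j + (n - b) = (j - b) + n" using bn by simp
      have "(j + (n - b)) mod n = ((j - b) + n) mod n" by (simp only: e)
      also have "... = j - b" using j by simp
      finally have "(j + (n - b)) mod n = j - b" .
      then have "n - b \<le> j - b" using h by simp
      then show False using j jb by linarith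
    qed
    then show "c \<in> cells m n - {m - a..<m} \<times> {n - b..<n}" using c i bn by (auto simp: cells_def)
  qed
qed

theorem lemma4p12:
  fixes m n a b :: nat and I2 :: "nat set"
  assumes "0 < a" "0 < b" "a < m" "b < n"
    and "I2 = {0..<b} \<or> I2 = {n - b..<n}"
    and "gcd m n = a + b" and "gcd a b = 1"
  shows "is_solution (cells m n - {m - a..<m} \<times> I2) (bishop m n (cells m n - {m - a..<m} \<times> I2))"
proof -
  interpret bsetup m n a b using assms by unfold_locales auto
  have S1: "is_solution (cells m n - {m - a..<m} \<times> {0..<b}) (bishop m n (cells m n - {m - a..<m} \<times> {0..<b}))"
    using sol unfolding FF_def .
  show ?thesis
  proof (cases "I2 = {0..<b}")
    case True then show ?thesis using S1 by simp
  next
    case False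
    then have I2: "I2 = {n - b..<n}" using assms(5) by simp
    have sub: "cells m n - {m - a..<m} \<times> {0..<b} \<subseteq> cells m n" by blast
    show ?thesis unfolding I2 shift_set[OF assms(4), of m a]
      by (rule sol_tau[OF sub n0 S1])
  qed
qed

end
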